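(* Let $F$ be a scalar group, $I$ an index set, and $\{V_i\}_{i\in I}$ a family of near-vector spaces over $F$. Let $\bigoplus_{i\in I}V_i=\{(v_i)_{i\in I}\in\prod_{i\in I}V_i : v_i=0\text{ for all but finitely many } i\}$, with componentwise addition and scalar multiplication, and for each $i\in I$ let $\iota_i:V_i\to\bigoplus_{j\in I}V_j$ send $v$ to the family whose $i$-th entry is $v$ and all other entries are $0$. Then: (1) $\bigoplus_{i\in I}V_i$ is a near-vector space over $F$ and each $\iota_i$ is $F$-linear; (2) $\bigl(\bigoplus_{i\in I}V_i,\{\iota_i\}_{i\in I}\bigr)$ is a coproduct of the family $\{V_i\}_{i\in I}$ in the category of near-vector spaces over $F$ (with $F$-linear maps as morphisms).
   Context: A scalar group is a tuple $(F,\cdot,1,0,-1)$ where $(F,\cdot,1)$ is a monoid, $0\cdot\alpha=0=\alpha\cdot0$, $\{\pm1\}$ is the solution set of $x^2=1$, and $F\setminus\{0\}$ is a group under $\cdot$. An $F$-space is an abelian group $V$ with a left action of $(F,\cdot)$ by group endomorphisms such that $0,1,-1$ act as $0,\mathrm{id},-\mathrm{id}$. The quasi-kernel is $Q(V)=\{u\in V:\forall\alpha,\beta\in F\ \exists\gamma\in F,\ \alpha u+\beta u=\gamma u\}$. A near-vector space over $F$ is an $F$-space with free action (for $u\ne0$, $\alpha u=\beta u\Rightarrow\alpha=\beta$) such that $Q(V)$ generates $V$ as an additive group. An $F$-linear map is an additive homomorphism $\phi$ with $\phi(\alpha u)=\alpha\phi(u)$ for all $\alpha\in F$. *)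

theory Defs
  imports "HOL-Algebra.Algebra"
begin

text \<open>A scalar group is represented by a HOL-Algebra monoid F (multiplication, 1)
  together with distinguished elements z (the zero 0) and n (the element -1).\<close>

definition scalar_group :: "'f monoid \<Rightarrow> 'f \<Rightarrow> 'f \<Rightarrow> bool" where
  "scalar_group F z n \<longleftrightarrow>
     monoid F \<and> z \<in> carrier F \<and> n \<in> carrier F \<and>
     (\<forall>a\<in>carrier F. z \<otimes>\<^bsub>F\<^esub> a = z \<and> a \<otimes>\<^bsub>F\<^esub> z = z) \<and>
     {x \<in> carrier F. x \<otimes>\<^bsub>F\<^esub> x = \<one>\<^bsub>F\<^esub>} = {\<one>\<^bsub>F\<^esub>, n} \<and>
     group (F\<lparr>carrier := carrier F - {z}\<rparr>)"

text \<open>An F-space: an abelian group written as a HOL-Algebra commutative (multiplicatively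
  written) group V (so the vector addition is the monoid operation, the zero vector is
  the unit, and negation is inv), together with a scalar action smult.\<close>

record ('f, 'v) fspace = "'v monoid" +
  smult :: "'f \<Rightarrow> 'v \<Rightarrow> 'v" (infixr "\<odot>\<index>" 75)

definition is_fspace :: "'f monoid \<Rightarrow> 'f \<Rightarrow> 'f \<Rightarrow> ('f, 'v) fspace \<Rightarrow> bool" where
  "is_fspace F z n V \<longleftrightarrow>
     comm_group V \<and>
     (\<forall>a\<in>carrier F. \<forall>v\<in>carrier V. a \<odot>\<^bsub>V\<^esub> v \<in> carrier V) \<and>
     (\<forall>a\<in>carrier F. \<forall>u\<in>carrier V. \<forall>v\<in>carrier V.
        a \<odot>\<^bsub>V\<^esub> (u \<otimes>\<^bsub>V\<^esub> v) = (a \<odot>\<^bsub>V\<^esub> u) \<otimes>\<^bsub>V\<^esub> (a \<odot>\<^bsub>V\<^esub> v)) \<and>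
     (\<forall>a\<in>carrier F. \<forall>b\<in>carrier F. \<forall>v\<in>carrier V.
        (a \<otimes>\<^bsub>F\<^esub> b) \<odot>\<^bsub>V\<^esub> v = a \<odot>\<^bsub>V\<^esub> (b \<odot>\<^bsub>V\<^esub> v)) \<and>
     (\<forall>v\<in>carrier V. \<one>\<^bsub>F\<^esub> \<odot>\<^bsub>V\<^esub> v = v) \<and>
     (\<forall>v\<in>carrier V. z \<odot>\<^bsub>V\<^esub> v = \<one>\<^bsub>V\<^esub>) \<and>
     (\<forall>v\<in>carrier V. n \<odot>\<^bsub>V\<^esub> v = inv\<^bsub>V\<^esub> v)"

definition quasi_kernel :: "'f monoid \<Rightarrow> ('f, 'v) fspace \<Rightarrow> 'v set" where
  "quasi_kernel F V = {u \<in> carrier V. \<forall>a\<in>carrier F. \<forall>b\<in>carrier F.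
      \<exists>c\<in>carrier F. (a \<odot>\<^bsub>V\<^esub> u) \<otimes>\<^bsub>V\<^esub> (b \<odot>\<^bsub>V\<^esub> u) = c \<odot>\<^bsub>V\<^esub> u}"

definition near_vector_space :: "'f monoid \<Rightarrow> 'f \<Rightarrow> 'f \<Rightarrow> ('f, 'v) fspace \<Rightarrow> bool" where
  "near_vector_space F z n V \<longleftrightarrow>
     is_fspace F z n V \<and>
     (\<forall>u\<in>carrier V. u \<noteq> \<one>\<^bsub>V\<^esub> \<longrightarrow>
        (\<forall>a\<in>carrier F. \<forall>b\<in>carrier F. a \<odot>\<^bsub>V\<^esub> u = b \<odot>\<^bsub>V\<^esub> u \<longrightarrow> a = b)) \<and>
     generate V (quasi_kernel F V) = carrier V"

definition linear_map :: "'f monoid \<Rightarrow> ('f, 'v) fspace \<Rightarrow> ('f, 'w) fspace \<Rightarrow> ('v \<Rightarrow> 'w) \<Rightarrow> bool" where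
  "linear_map F V W \<phi> \<longleftrightarrow>
     \<phi> \<in> hom V W \<and>
     (\<forall>a\<in>carrier F. \<forall>u\<in>carrier V. \<phi> (a \<odot>\<^bsub>V\<^esub> u) = a \<odot>\<^bsub>W\<^esub> \<phi> u)"

definition direct_sum :: "'i set \<Rightarrow> ('i \<Rightarrow> ('f, 'v) fspace) \<Rightarrow> ('f, 'i \<Rightarrow> 'v) fspace" where
  "direct_sum I V =
     \<lparr> partial_object.carrier = {x \<in> (\<Pi>\<^sub>E i\<in>I. carrier (V i)). finite {i \<in> I. x i \<noteq> \<one>\<^bsub>V i\<^esub>}},
       monoid.mult = (\<lambda>x y. \<lambda>i\<in>I. x i \<otimes>\<^bsub>V i\<^esub> y i),
       monoid.one = (\<lambda>i\<in>I. \<one>\<^bsub>V i\<^esub>),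
       fspace.smult = (\<lambda>a x. \<lambda>i\<in>I. a \<odot>\<^bsub>V i\<^esub> x i) \<rparr>"

definition ds_inj :: "'i set \<Rightarrow> ('i \<Rightarrow> ('f, 'v) fspace) \<Rightarrow> 'i \<Rightarrow> 'v \<Rightarrow> ('i \<Rightarrow> 'v)" where
  "ds_inj I V i v = (\<lambda>j\<in>I. if j = i then v else \<one>\<^bsub>V j\<^esub>)"

end

theory Submission
  imports Defs
begin

lemma ds_carrier: "carrier (direct_sum I V) = {x \<in> (\<Pi>\<^sub>E i\<in>I. carrier (V i)). finite {i \<in> I. x i \<noteq> \<one>\<^bsub>V i\<^esub>}}"
  by (simp add: direct_sum_def)
lemma ds_mult: "x \<otimes>\<^bsub>direct_sum I V\<^esub> y = (\<lambda>i\<in>I. x i \<otimes>\<^bsub>V i\<^esub> y i)"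
  by (simp add: direct_sum_def)
lemma ds_one: "\<one>\<^bsub>direct_sum I V\<^esub> = (\<lambda>i\<in>I. \<one>\<^bsub>V i\<^esub>)"
  by (simp add: direct_sum_def)
lemma ds_smult: "fspace.smult (direct_sum I V) a x = (\<lambda>i\<in>I. fspace.smult (V i) a (x i))"
  by (simp add: direct_sum_def)

lemma fs_group: "is_fspace F z n V \<Longrightarrow> comm_group V"
  by (simp add: is_fspace_def)

lemma fs_smult_closed: "is_fspace F z n V \<Longrightarrow> a \<in> carrier F \<Longrightarrow> v \<in> carrier V \<Longrightarrow> fspace.smult V a v \<in> carrier V"
  by (simp add: is_fspace_def)

lemma fs_smult_mult: "is_fspace F z n V \<Longrightarrow> a \<in> carrier F \<Longrightarrow> u \<in> carrier V \<Longrightarrow> v \<in> carrier V \<Longrightarrow>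
   fspace.smult V a (u \<otimes>\<^bsub>V\<^esub> v) = (fspace.smult V a u) \<otimes>\<^bsub>V\<^esub> (fspace.smult V a v)"
  by (simp add: is_fspace_def)

lemma fs_smult_one: assumes "is_fspace F z n V" "a \<in> carrier F" shows "fspace.smult V a \<one>\<^bsub>V\<^esub> = \<one>\<^bsub>V\<^esub>"
proof -
  interpret comm_group V by (rule fs_group[OF assms(1)])
  have c: "fspace.smult V a \<one>\<^bsub>V\<^esub> \<in> carrier V" by (rule fs_smult_closed[OF assms]) simp
  have "fspace.smult V a \<one>\<^bsub>V\<^esub> = (fspace.smult V a \<one>\<^bsub>V\<^esub>) \<otimes>\<^bsub>V\<^esub> (fspace.smult V a \<one>\<^bsub>V\<^esub>)"
  proof -
    have "fspace.smult V a (\<one>\<^bsub>V\<^esub> \<otimes>\<^bsub>V\<^esub> \<one>\<^bsub>V\<^esub>) = (fspace.smult V a \<one>\<^bsub>V\<^esub>) \<otimes>\<^bsub>V\<^esub> (fspace.smult V a \<one>\<^bsub>V\<^esub>)"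
      by (rule fs_smult_mult[OF assms]) simp_all
    then show ?thesis by simp
  qed
  then have "\<one>\<^bsub>V\<^esub> \<otimes>\<^bsub>V\<^esub> fspace.smult V a \<one>\<^bsub>V\<^esub> = (fspace.smult V a \<one>\<^bsub>V\<^esub>) \<otimes>\<^bsub>V\<^esub> (fspace.smult V a \<one>\<^bsub>V\<^esub>)"
    using c by simp
  then show ?thesis using c by (metis one_closed right_cancel)
qed


lemma ds_comm_group:
  assumes "\<forall>i\<in>I. comm_group (V i)"
  shows "comm_group (direct_sum I V)"
proof -
  have G: "\<And>i. i \<in> I \<Longrightarrow> group (V i)" using assms by (simp add: comm_group_def)
  have M: "\<And>i. i \<in> I \<Longrightarrow> monoid (V i)" using G by (simp add: group_def)
  have C: "\<And>i. i \<in> I \<Longrightarrow> comm_monoid (V i)" using assms by (simp add: comm_group_def)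
  show ?thesis
  proof (rule comm_groupI)
    fix x y assume x: "x \<in> carrier (direct_sum I V)" and y: "y \<in> carrier (direct_sum I V)"
    have xc: "\<And>i. i \<in> I \<Longrightarrow> x i \<in> carrier (V i)" and yc: "\<And>i. i \<in> I \<Longrightarrow> y i \<in> carrier (V i)"
      using x y by (auto simp: ds_carrier)
    have "{i \<in> I. x i \<otimes>\<^bsub>V i\<^esub> y i \<noteq> \<one>\<^bsub>V i\<^esub>} \<subseteq> {i \<in> I. x i \<noteq> \<one>\<^bsub>V i\<^esub>} \<union> {i \<in> I. y i \<noteq> \<one>\<^bsub>V i\<^esub>}"
      by (auto simp: monoid.l_one[OF M] monoid.one_closed[OF M] yc)
    moreover have "finite ({i \<in> I. x i \<noteq> \<one>\<^bsub>V i\<^esub>} \<union> {i \<in> I. y i \<noteq> \<one>\<^bsub>V i\<^esub>})"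
      using x y by (simp add: ds_carrier)
    ultimately show "x \<otimes>\<^bsub>direct_sum I V\<^esub> y \<in> carrier (direct_sum I V)"
      unfolding ds_mult by (auto simp: ds_carrier intro: finite_subset monoid.m_closed[OF M] xc yc)
    show "x \<otimes>\<^bsub>direct_sum I V\<^esub> y = y \<otimes>\<^bsub>direct_sum I V\<^esub> x"
      unfolding ds_mult by (rule restrict_ext) (simp add: comm_monoid.m_comm[OF C] xc yc)
  next
    fix x assume x: "x \<in> carrier (direct_sum I V)"
    have xc: "\<And>i. i \<in> I \<Longrightarrow> x i \<in> carrier (V i)" and xe: "x \<in> extensional I"
      using x by (auto simp: ds_carrier PiE_iff)
    show "\<one>\<^bsub>direct_sum I V\<^esub> \<otimes>\<^bsub>direct_sum I V\<^esub> x = x"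
      unfolding ds_mult ds_one by (rule extensionalityI[OF _ xe]) (auto simp: monoid.l_one[OF M] xc)
    show "\<exists>y\<in>carrier (direct_sum I V). y \<otimes>\<^bsub>direct_sum I V\<^esub> x = \<one>\<^bsub>direct_sum I V\<^esub>"
    proof (intro bexI)
      show "(\<lambda>i\<in>I. inv\<^bsub>V i\<^esub> x i) \<otimes>\<^bsub>direct_sum I V\<^esub> x = \<one>\<^bsub>direct_sum I V\<^esub>"
        unfolding ds_mult ds_one by (rule restrict_ext) (simp add: group.l_inv[OF G] xc)
      have "{i \<in> I. inv\<^bsub>V i\<^esub> x i \<noteq> \<one>\<^bsub>V i\<^esub>} \<subseteq> {i \<in> I. x i \<noteq> \<one>\<^bsub>V i\<^esub>}"
        by (auto simp: monoid.inv_one[OF M])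
      moreover have "finite {i \<in> I. x i \<noteq> \<one>\<^bsub>V i\<^esub>}" using x by (simp add: ds_carrier)
      ultimately show "(\<lambda>i\<in>I. inv\<^bsub>V i\<^esub> x i) \<in> carrier (direct_sum I V)"
        by (auto simp: ds_carrier intro: finite_subset group.inv_closed[OF G] xc)
    qed
  next
    show "\<one>\<^bsub>direct_sum I V\<^esub> \<in> carrier (direct_sum I V)"
      by (auto simp: ds_carrier ds_one intro: monoid.one_closed[OF M])
  next
    fix x y w assume "x \<in> carrier (direct_sum I V)" "y \<in> carrier (direct_sum I V)" "w \<in> carrier (direct_sum I V)"
    then have "\<And>i. i \<in> I \<Longrightarrow> x i \<in> carrier (V i) \<and> y i \<in> carrier (V i) \<and> w i \<in> carrier (V i)"
      by (auto simp: ds_carrier)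
    then show "x \<otimes>\<^bsub>direct_sum I V\<^esub> y \<otimes>\<^bsub>direct_sum I V\<^esub> w = x \<otimes>\<^bsub>direct_sum I V\<^esub> (y \<otimes>\<^bsub>direct_sum I V\<^esub> w)"
      unfolding ds_mult by (intro restrict_ext) (simp add: monoid.m_assoc[OF M])
  qed
qed


lemma fs_finprod_smult:
  assumes W: "is_fspace F z n W" and a: "a \<in> carrier F" and S: "finite S" and g: "g \<in> S \<rightarrow> carrier W"
  shows "fspace.smult W a (finprod W g S) = finprod W (\<lambda>i. fspace.smult W a (g i)) S"
  using S g
proof (induction S rule: finite_induct)
  case empty
  interpret comm_group W by (rule fs_group[OF W])
  show ?case by (simp add: fs_smult_one[OF W a])
next
  case (insert j S)
  interpret comm_group W by (rule fs_group[OF W])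
  have gS: "g \<in> S \<rightarrow> carrier W" and gj: "g j \<in> carrier W" using insert.prems by auto
  have g2: "(\<lambda>i. fspace.smult W a (g i)) \<in> S \<rightarrow> carrier W" using gS fs_smult_closed[OF W a] by auto
  show ?case
    using insert.hyps insert.IH[OF gS] gS gj g2
    by (simp add: fs_smult_mult[OF W a] fs_smult_closed[OF W a])
qed

context
  fixes F :: "'f monoid" and z n :: 'f and I :: "'i set" and V :: "'i \<Rightarrow> ('f, 'v) fspace"
  assumes fs: "\<forall>i\<in>I. is_fspace F z n (V i)"
begin

lemma G: "i \<in> I \<Longrightarrow> group (V i)" using fs fs_group comm_group_def by metis
lemma M: "i \<in> I \<Longrightarrow> monoid (V i)" using G group_def by metis
lemma FS: "i \<in> I \<Longrightarrow> is_fspace F z n (V i)" using fs by blast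

lemma D_grp: "comm_group (direct_sum I V)"
  by (rule ds_comm_group, rule ballI, rule fs_group, erule FS)

lemma inC: "x \<in> carrier (direct_sum I V) \<Longrightarrow> i \<in> I \<Longrightarrow> x i \<in> carrier (V i)"
  by (auto simp: ds_carrier)
lemma inE: "x \<in> carrier (direct_sum I V) \<Longrightarrow> x \<in> extensional I"
  by (auto simp: ds_carrier PiE_iff)
lemma inF: "x \<in> carrier (direct_sum I V) \<Longrightarrow> finite {i \<in> I. x i \<noteq> \<one>\<^bsub>V i\<^esub>}"
  by (auto simp: ds_carrier)

lemma carrierI:
  assumes "\<And>i. i \<in> I \<Longrightarrow> x i \<in> carrier (V i)" "x \<in> extensional I" "finite S"
    "\<And>i. i \<in> I \<Longrightarrow> i \<notin> S \<Longrightarrow> x i = \<one>\<^bsub>V i\<^esub>"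
  shows "x \<in> carrier (direct_sum I V)"
proof -
  have "{i \<in> I. x i \<noteq> \<one>\<^bsub>V i\<^esub>} \<subseteq> S" using assms(4) by blast
  then show ?thesis using assms by (auto simp: ds_carrier PiE_iff intro: finite_subset)
qed

lemma ds_inv: assumes x: "x \<in> carrier (direct_sum I V)"
  shows "inv\<^bsub>direct_sum I V\<^esub> x = (\<lambda>i\<in>I. inv\<^bsub>V i\<^esub> x i)"
proof -
  interpret D: comm_group "direct_sum I V" by (rule D_grp)
  have c: "(\<lambda>i\<in>I. inv\<^bsub>V i\<^esub> x i) \<in> carrier (direct_sum I V)"
    by (rule carrierI[where S="{i \<in> I. x i \<noteq> \<one>\<^bsub>V i\<^esub>}"])
       (auto simp: group.inv_closed[OF G] inC[OF x] inF[OF x] monoid.inv_one[OF M])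
  have "(\<lambda>i\<in>I. inv\<^bsub>V i\<^esub> x i) \<otimes>\<^bsub>direct_sum I V\<^esub> x = \<one>\<^bsub>direct_sum I V\<^esub>"
    unfolding ds_mult ds_one by (rule restrict_ext) (simp add: group.l_inv[OF G] inC[OF x])
  then show ?thesis using D.inv_equality c x by blast
qed

lemma D_fspace: "is_fspace F z n (direct_sum I V)"
  unfolding is_fspace_def
proof (intro conjI ballI)
  show "comm_group (direct_sum I V)" by (rule D_grp)
next
  fix a x assume a: "a \<in> carrier F" and x: "x \<in> carrier (direct_sum I V)"
  show "fspace.smult (direct_sum I V) a x \<in> carrier (direct_sum I V)"
    unfolding ds_smult
    by (rule carrierI[where S="{i \<in> I. x i \<noteq> \<one>\<^bsub>V i\<^esub>}"])
       (auto simp: fs_smult_closed[OF FS a] inC[OF x] inF[OF x] fs_smult_one[OF FS a])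
next
  fix a u v assume a: "a \<in> carrier F" and u: "u \<in> carrier (direct_sum I V)" and v: "v \<in> carrier (direct_sum I V)"
  show "fspace.smult (direct_sum I V) a (u \<otimes>\<^bsub>direct_sum I V\<^esub> v) =
      fspace.smult (direct_sum I V) a u \<otimes>\<^bsub>direct_sum I V\<^esub> fspace.smult (direct_sum I V) a v"
    unfolding ds_smult ds_mult by (rule restrict_ext) (simp add: fs_smult_mult[OF FS a] inC[OF u] inC[OF v])
next
  fix a b x assume a: "a \<in> carrier F" and b: "b \<in> carrier F" and x: "x \<in> carrier (direct_sum I V)"
  show "fspace.smult (direct_sum I V) (a \<otimes>\<^bsub>F\<^esub> b) x = fspace.smult (direct_sum I V) a (fspace.smult (direct_sum I V) b x)"
    unfolding ds_smult using FS a b inC[OF x] by (intro restrict_ext) (simp add: is_fspace_def)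
next
  fix x assume x: "x \<in> carrier (direct_sum I V)"
  show "fspace.smult (direct_sum I V) \<one>\<^bsub>F\<^esub> x = x"
    unfolding ds_smult using FS inC[OF x] by (intro extensionalityI[OF _ inE[OF x]]) (simp_all add: is_fspace_def)
  show "fspace.smult (direct_sum I V) z x = \<one>\<^bsub>direct_sum I V\<^esub>"
    unfolding ds_smult ds_one using FS inC[OF x] by (intro restrict_ext) (simp add: is_fspace_def)
  show "fspace.smult (direct_sum I V) n x = inv\<^bsub>direct_sum I V\<^esub> x"
    unfolding ds_smult ds_inv[OF x] using FS inC[OF x] by (intro restrict_ext) (simp add: is_fspace_def)
qed

lemma D_free:
  assumes u: "u \<in> carrier (direct_sum I V)" and ne: "u \<noteq> \<one>\<^bsub>direct_sum I V\<^esub>"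
    and free: "\<forall>i\<in>I. \<forall>u\<in>carrier (V i). u \<noteq> \<one>\<^bsub>V i\<^esub> \<longrightarrow>
        (\<forall>a\<in>carrier F. \<forall>b\<in>carrier F. fspace.smult (V i) a u = fspace.smult (V i) b u \<longrightarrow> a = b)"
    and a: "a \<in> carrier F" and b: "b \<in> carrier F"
    and eq: "fspace.smult (direct_sum I V) a u = fspace.smult (direct_sum I V) b u"
  shows "a = b"
proof -
  obtain i where i: "i \<in> I" "u i \<noteq> \<one>\<^bsub>V i\<^esub>"
  proof (rule ccontr)
    assume "\<not> thesis"
    with that have "\<forall>i\<in>I. u i = \<one>\<^bsub>V i\<^esub>" by blast
    then have "u = \<one>\<^bsub>direct_sum I V\<^esub>" unfolding ds_one
      by (intro extensionalityI[OF inE[OF u]]) auto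
    with ne show False by simp
  qed
  have "fspace.smult (V i) a (u i) = fspace.smult (V i) b (u i)"
    using fun_cong[OF eq, of i] i by (simp add: ds_smult)
  then show ?thesis using free i inC[OF u i(1)] a b by blast
qed

lemma inj_carrier: "i \<in> I \<Longrightarrow> v \<in> carrier (V i) \<Longrightarrow> ds_inj I V i v \<in> carrier (direct_sum I V)"
  unfolding ds_inj_def by (rule carrierI[where S="{i}"]) (auto simp: monoid.one_closed[OF M])

lemma inj_one: "i \<in> I \<Longrightarrow> ds_inj I V i \<one>\<^bsub>V i\<^esub> = \<one>\<^bsub>direct_sum I V\<^esub>"
  unfolding ds_inj_def ds_one by (rule restrict_ext) simp

lemma inj_mult: "i \<in> I \<Longrightarrow> u \<in> carrier (V i) \<Longrightarrow> v \<in> carrier (V i) \<Longrightarrow>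
   ds_inj I V i (u \<otimes>\<^bsub>V i\<^esub> v) = ds_inj I V i u \<otimes>\<^bsub>direct_sum I V\<^esub> ds_inj I V i v"
  unfolding ds_inj_def ds_mult by (rule restrict_ext) (auto simp: monoid.l_one[OF M] monoid.one_closed[OF M])

lemma inj_smult: "i \<in> I \<Longrightarrow> a \<in> carrier F \<Longrightarrow> v \<in> carrier (V i) \<Longrightarrow>
   ds_inj I V i (fspace.smult (V i) a v) = fspace.smult (direct_sum I V) a (ds_inj I V i v)"
  unfolding ds_inj_def ds_smult by (rule restrict_ext) (auto simp: fs_smult_one[OF FS])

lemma inj_hom: "i \<in> I \<Longrightarrow> ds_inj I V i \<in> hom (V i) (direct_sum I V)"
  by (rule homI) (simp_all add: inj_carrier inj_mult)

lemma inj_linear: "i \<in> I \<Longrightarrow> linear_map F (V i) (direct_sum I V) (ds_inj I V i)"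
  unfolding linear_map_def by (simp add: inj_hom inj_smult)

lemma inj_inv: "i \<in> I \<Longrightarrow> v \<in> carrier (V i) \<Longrightarrow>
   ds_inj I V i (inv\<^bsub>V i\<^esub> v) = inv\<^bsub>direct_sum I V\<^esub> (ds_inj I V i v)"
proof -
  assume i: "i \<in> I" and v: "v \<in> carrier (V i)"
  interpret gh: group_hom "V i" "direct_sum I V" "ds_inj I V i"
    unfolding group_hom_def group_hom_axioms_def
    using G[OF i] D_grp inj_hom[OF i] comm_group.axioms(2) by blast
  show ?thesis using v by simp
qed

lemma ds_induct:
  assumes x: "x \<in> carrier (direct_sum I V)"
    and one: "P \<one>\<^bsub>direct_sum I V\<^esub>"
    and step: "\<And>i v y. i \<in> I \<Longrightarrow> v \<in> carrier (V i) \<Longrightarrow> y \<in> carrier (direct_sum I V) \<Longrightarrow> P y \<Longrightarrow>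
       P (ds_inj I V i v \<otimes>\<^bsub>direct_sum I V\<^esub> y)"
  shows "P x"
proof -
  have "\<forall>x\<in>carrier (direct_sum I V). {i \<in> I. x i \<noteq> \<one>\<^bsub>V i\<^esub>} \<subseteq> S \<longrightarrow> P x" if "finite S" for S
    using that
  proof (induction S rule: finite_induct)
    case empty
    show ?case
    proof (intro ballI impI)
      fix x assume x: "x \<in> carrier (direct_sum I V)" and s: "{i \<in> I. x i \<noteq> \<one>\<^bsub>V i\<^esub>} \<subseteq> {}"
      have "x = \<one>\<^bsub>direct_sum I V\<^esub>" unfolding ds_one
        by (rule extensionalityI[OF inE[OF x]]) (use s in auto)
      then show "P x" using one by simp
    qed
  next
    case (insert j S)
    show ?case
    proof (intro ballI impI)
      fix x assume x: "x \<in> carrier (direct_sum I V)" and s: "{i \<in> I. x i \<noteq> \<one>\<^bsub>V i\<^esub>} \<subseteq> insert j S"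
      show "P x"
      proof (cases "j \<in> I")
        case False
        then have "{i \<in> I. x i \<noteq> \<one>\<^bsub>V i\<^esub>} \<subseteq> S" using s by blast
        then show ?thesis using insert.IH x by blast
      next
        case True
        define y where "y = x(j := \<one>\<^bsub>V j\<^esub>)"
        have yc: "y \<in> carrier (direct_sum I V)"
          by (rule carrierI[where S=S]) (use x s inE[OF x] inC[OF x] True insert.hyps in \<open>auto simp: y_def monoid.one_closed[OF M] extensional_def\<close>)
        have "{i \<in> I. y i \<noteq> \<one>\<^bsub>V i\<^esub>} \<subseteq> S" using s by (auto simp: y_def)
        then have Py: "P y" using insert.IH yc by blast
        have "x = ds_inj I V j (x j) \<otimes>\<^bsub>direct_sum I V\<^esub> y"
          unfolding ds_mult ds_inj_def
          by (rule extensionalityI[OF inE[OF x]]) (auto simp: y_def monoid.l_one[OF M] monoid.r_one[OF M] inC[OF x] True)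
        then show ?thesis using step[OF True inC[OF x True] yc Py] by simp
      qed
    qed
  qed
  then show ?thesis using x inF[OF x] by blast
qed

lemma qk_inj: assumes i: "i \<in> I" and h: "h \<in> quasi_kernel F (V i)"
  shows "ds_inj I V i h \<in> quasi_kernel F (direct_sum I V)"
proof -
  have hc: "h \<in> carrier (V i)" using h by (simp add: quasi_kernel_def)
  show ?thesis unfolding quasi_kernel_def
  proof (intro CollectI conjI ballI)
    show "ds_inj I V i h \<in> carrier (direct_sum I V)" by (rule inj_carrier[OF i hc])
    fix a b assume a: "a \<in> carrier F" and b: "b \<in> carrier F"
    obtain c where c: "c \<in> carrier F" "fspace.smult (V i) a h \<otimes>\<^bsub>V i\<^esub> fspace.smult (V i) b h = fspace.smult (V i) c h"
      using h a b unfolding quasi_kernel_def by blast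
    have "fspace.smult (direct_sum I V) a (ds_inj I V i h) \<otimes>\<^bsub>direct_sum I V\<^esub> fspace.smult (direct_sum I V) b (ds_inj I V i h)
        = ds_inj I V i (fspace.smult (V i) a h \<otimes>\<^bsub>V i\<^esub> fspace.smult (V i) b h)"
      by (simp add: inj_smult[OF i a hc, symmetric] inj_smult[OF i b hc, symmetric] inj_mult[OF i] fs_smult_closed[OF FS[OF i]] a b hc)
    also have "\<dots> = fspace.smult (direct_sum I V) c (ds_inj I V i h)"
      by (simp add: c(2) inj_smult[OF i c(1) hc])
    finally show "\<exists>c\<in>carrier F. fspace.smult (direct_sum I V) a (ds_inj I V i h) \<otimes>\<^bsub>direct_sum I V\<^esub> fspace.smult (direct_sum I V) b (ds_inj I V i h) = fspace.smult (direct_sum I V) c (ds_inj I V i h)"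
      using c(1) by blast
  qed
qed

lemma gen_inj:
  assumes i: "i \<in> I" and g: "h \<in> generate (V i) (quasi_kernel F (V i))"
  shows "h \<in> carrier (V i) \<and> ds_inj I V i h \<in> generate (direct_sum I V) (quasi_kernel F (direct_sum I V))"
  using g
proof (induction h rule: generate.induct)
  case one
  then show ?case using inj_one[OF i] generate.one monoid.one_closed[OF M[OF i]] by metis
next
  case (incl h)
  then have "h \<in> carrier (V i)" by (simp add: quasi_kernel_def)
  then show ?case using generate.incl[OF qk_inj[OF i incl]] by blast
next
  case (inv h)
  then have hc: "h \<in> carrier (V i)" by (simp add: quasi_kernel_def)
  show ?case using inv qk_inj[OF i inv] generate.inv inj_inv[OF i hc] group.inv_closed[OF G[OF i] hc] by metis
next
  case (eng h1 h2)
  then show ?case using inj_mult[OF i] generate.eng monoid.m_closed[OF M[OF i]] by metis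
qed

lemma D_gen:
  assumes gen: "\<forall>i\<in>I. generate (V i) (quasi_kernel F (V i)) = carrier (V i)"
  shows "generate (direct_sum I V) (quasi_kernel F (direct_sum I V)) = carrier (direct_sum I V)"
proof
  show "generate (direct_sum I V) (quasi_kernel F (direct_sum I V)) \<subseteq> carrier (direct_sum I V)"
  proof -
    have sub: "quasi_kernel F (direct_sum I V) \<subseteq> carrier (direct_sum I V)" by (auto simp: quasi_kernel_def)
    show ?thesis using group.generate_in_carrier[OF comm_group.axioms(2)[OF D_grp] sub] by blast
  qed
  show "carrier (direct_sum I V) \<subseteq> generate (direct_sum I V) (quasi_kernel F (direct_sum I V))"
  proof
    fix x assume x: "x \<in> carrier (direct_sum I V)"
    show "x \<in> generate (direct_sum I V) (quasi_kernel F (direct_sum I V))"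
      using x
    proof (rule ds_induct)
      show "\<one>\<^bsub>direct_sum I V\<^esub> \<in> generate (direct_sum I V) (quasi_kernel F (direct_sum I V))"
        by (rule generate.one)
      fix i v y assume i: "i \<in> I" and v: "v \<in> carrier (V i)" and y: "y \<in> generate (direct_sum I V) (quasi_kernel F (direct_sum I V))"
      have "v \<in> generate (V i) (quasi_kernel F (V i))" using gen i v by blast
      then have "ds_inj I V i v \<in> generate (direct_sum I V) (quasi_kernel F (direct_sum I V))"
        using gen_inj[OF i] by blast
      then show "ds_inj I V i v \<otimes>\<^bsub>direct_sum I V\<^esub> y \<in> generate (direct_sum I V) (quasi_kernel F (direct_sum I V))"
        using y by (rule generate.eng)
    qed
  qed
qed

lemma universal:
  fixes W :: "('f, 'w) fspace" and f :: "'i \<Rightarrow> 'v \<Rightarrow> 'w"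
  assumes W: "is_fspace F z n W" and lin: "\<forall>i\<in>I. linear_map F (V i) W (f i)"
  shows "(\<exists>\<psi>. linear_map F (direct_sum I V) W \<psi> \<and>
                 (\<forall>i\<in>I. \<forall>v\<in>carrier (V i). \<psi> (ds_inj I V i v) = f i v)) \<and>
            (\<forall>\<psi>1 \<psi>2. linear_map F (direct_sum I V) W \<psi>1 \<and>
                 (\<forall>i\<in>I. \<forall>v\<in>carrier (V i). \<psi>1 (ds_inj I V i v) = f i v) \<and>
                 linear_map F (direct_sum I V) W \<psi>2 \<and>
                 (\<forall>i\<in>I. \<forall>v\<in>carrier (V i). \<psi>2 (ds_inj I V i v) = f i v) \<longrightarrow>
                 (\<forall>x\<in>carrier (direct_sum I V). \<psi>1 x = \<psi>2 x))"
proof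
  interpret W: comm_group W by (rule fs_group[OF W])
  have hom: "\<And>i. i \<in> I \<Longrightarrow> f i \<in> hom (V i) W" using lin by (simp add: linear_map_def)
  have fone: "\<And>i. i \<in> I \<Longrightarrow> f i \<one>\<^bsub>V i\<^esub> = \<one>\<^bsub>W\<^esub>"
  proof -
    fix i assume i: "i \<in> I"
    interpret gh: group_hom "V i" W "f i"
      unfolding group_hom_def group_hom_axioms_def using G[OF i] W.group_axioms hom[OF i] by blast
    show "f i \<one>\<^bsub>V i\<^esub> = \<one>\<^bsub>W\<^esub>" by simp
  qed
  have fc: "\<And>i v. i \<in> I \<Longrightarrow> v \<in> carrier (V i) \<Longrightarrow> f i v \<in> carrier W"
    by (rule hom_in_carrier[OF hom])
  define supp where "supp x = {i \<in> I. x i \<noteq> \<one>\<^bsub>V i\<^esub>}" for x :: "'i \<Rightarrow> 'v"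
  define \<psi> where "\<psi> x = finprod W (\<lambda>i. f i (x i)) (supp x)" for x
  have Pi: "(\<lambda>i. f i (x i)) \<in> S \<rightarrow> carrier W" if "x \<in> carrier (direct_sum I V)" "S \<subseteq> I" for x S
    using that fc inC by blast
  have psiS: "\<psi> x = finprod W (\<lambda>i. f i (x i)) S"
    if x: "x \<in> carrier (direct_sum I V)" and S: "finite S" "S \<subseteq> I" "supp x \<subseteq> S" for x S
    unfolding \<psi>_def
  proof (rule W.finprod_mono_neutral_cong_left[OF S(1) S(3)])
    fix i assume "i \<in> S - supp x"
    then show "f i (x i) = \<one>\<^bsub>W\<^esub>" using S fone by (auto simp: supp_def)
  qed (use Pi[OF x S(2)] in auto)
  have fsupp: "finite (supp x)" "supp x \<subseteq> I" if "x \<in> carrier (direct_sum I V)" for x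
    using inF[OF that] by (auto simp: supp_def)
  have psic: "\<psi> x \<in> carrier W" if "x \<in> carrier (direct_sum I V)" for x
    unfolding \<psi>_def using Pi[OF that fsupp(2)[OF that]] by (rule W.finprod_closed)
  show "\<exists>\<psi>. linear_map F (direct_sum I V) W \<psi> \<and> (\<forall>i\<in>I. \<forall>v\<in>carrier (V i). \<psi> (ds_inj I V i v) = f i v)"
  proof (intro exI conjI ballI)
    show "linear_map F (direct_sum I V) W \<psi>"
      unfolding linear_map_def
    proof (intro conjI ballI homI)
      fix x assume "x \<in> carrier (direct_sum I V)" then show "\<psi> x \<in> carrier W" by (rule psic)
    next
      fix x y assume x: "x \<in> carrier (direct_sum I V)" and y: "y \<in> carrier (direct_sum I V)"
      have xy: "x \<otimes>\<^bsub>direct_sum I V\<^esub> y \<in> carrier (direct_sum I V)"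
        using x y by (rule monoid.m_closed[OF group.is_monoid[OF comm_group.axioms(2)[OF D_grp]]])
      define S where "S = supp x \<union> supp y \<union> supp (x \<otimes>\<^bsub>direct_sum I V\<^esub> y)"
      have S: "finite S" "S \<subseteq> I" using fsupp x y xy by (auto simp: S_def)
      have "\<psi> (x \<otimes>\<^bsub>direct_sum I V\<^esub> y) = finprod W (\<lambda>i. f i ((x \<otimes>\<^bsub>direct_sum I V\<^esub> y) i)) S"
        by (rule psiS[OF xy S]) (auto simp: S_def)
      also have "\<dots> = finprod W (\<lambda>i. f i (x i) \<otimes>\<^bsub>W\<^esub> f i (y i)) S"
        by (rule W.finprod_cong') (use S hom inC[OF x] inC[OF y] fc in \<open>auto simp: ds_mult hom_mult\<close>)
      also have "\<dots> = finprod W (\<lambda>i. f i (x i)) S \<otimes>\<^bsub>W\<^esub> finprod W (\<lambda>i. f i (y i)) S"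
        by (rule W.finprod_multf) (use Pi[OF x S(2)] Pi[OF y S(2)] in auto)
      also have "\<dots> = \<psi> x \<otimes>\<^bsub>W\<^esub> \<psi> y"
      proof -
        have "supp x \<subseteq> S" "supp y \<subseteq> S" unfolding S_def by auto
        then show ?thesis using psiS[OF x S] psiS[OF y S] by simp
      qed
      finally show "\<psi> (x \<otimes>\<^bsub>direct_sum I V\<^esub> y) = \<psi> x \<otimes>\<^bsub>W\<^esub> \<psi> y" .
    next
      fix a x assume a: "a \<in> carrier F" and x: "x \<in> carrier (direct_sum I V)"
      have ax: "fspace.smult (direct_sum I V) a x \<in> carrier (direct_sum I V)"
        using D_fspace a x by (simp add: is_fspace_def)
      define S where "S = supp x \<union> supp (fspace.smult (direct_sum I V) a x)"
      have S: "finite S" "S \<subseteq> I" using fsupp x ax by (auto simp: S_def)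
      have "\<psi> (fspace.smult (direct_sum I V) a x) = finprod W (\<lambda>i. f i (fspace.smult (direct_sum I V) a x i)) S"
        by (rule psiS[OF ax S]) (auto simp: S_def)
      also have "\<dots> = finprod W (\<lambda>i. fspace.smult W a (f i (x i))) S"
        by (rule W.finprod_cong') (use S lin a inC[OF x] fc fs_smult_closed[OF W a] in \<open>auto simp: ds_smult linear_map_def\<close>)
      also have "\<dots> = fspace.smult W a (finprod W (\<lambda>i. f i (x i)) S)"
        by (rule fs_finprod_smult[OF W a S(1) Pi[OF x S(2)], symmetric])
      also have "\<dots> = fspace.smult W a (\<psi> x)"
      proof -
        have "supp x \<subseteq> S" unfolding S_def by auto
        then show ?thesis using psiS[OF x S] by simp
      qed
      finally show "\<psi> (fspace.smult (direct_sum I V) a x) = fspace.smult W a (\<psi> x)" .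
    qed
  next
    fix i v assume i: "i \<in> I" and v: "v \<in> carrier (V i)"
    have "\<psi> (ds_inj I V i v) = finprod W (\<lambda>j. f j (ds_inj I V i v j)) {i}"
      by (rule psiS[OF inj_carrier[OF i v]]) (auto simp: supp_def ds_inj_def i)
    also have "\<dots> = f i v" using i v fc by (simp add: ds_inj_def)
    finally show "\<psi> (ds_inj I V i v) = f i v" .
  qed
next
  interpret W: comm_group W by (rule fs_group[OF W])
  show "\<forall>\<psi>1 \<psi>2. linear_map F (direct_sum I V) W \<psi>1 \<and>
                 (\<forall>i\<in>I. \<forall>v\<in>carrier (V i). \<psi>1 (ds_inj I V i v) = f i v) \<and>
                 linear_map F (direct_sum I V) W \<psi>2 \<and>
                 (\<forall>i\<in>I. \<forall>v\<in>carrier (V i). \<psi>2 (ds_inj I V i v) = f i v) \<longrightarrow>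
                 (\<forall>x\<in>carrier (direct_sum I V). \<psi>1 x = \<psi>2 x)"
  proof (intro allI impI ballI)
    fix \<psi>1 \<psi>2 x
    assume H: "linear_map F (direct_sum I V) W \<psi>1 \<and>
                 (\<forall>i\<in>I. \<forall>v\<in>carrier (V i). \<psi>1 (ds_inj I V i v) = f i v) \<and>
                 linear_map F (direct_sum I V) W \<psi>2 \<and>
                 (\<forall>i\<in>I. \<forall>v\<in>carrier (V i). \<psi>2 (ds_inj I V i v) = f i v)"
      and x: "x \<in> carrier (direct_sum I V)"
    have h1: "\<psi>1 \<in> hom (direct_sum I V) W" and h2: "\<psi>2 \<in> hom (direct_sum I V) W"
      using H by (auto simp: linear_map_def)
    interpret g1: group_hom "direct_sum I V" W \<psi>1
      unfolding group_hom_def group_hom_axioms_def using comm_group.axioms(2)[OF D_grp] W.group_axioms h1 by blast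
    interpret g2: group_hom "direct_sum I V" W \<psi>2
      unfolding group_hom_def group_hom_axioms_def using comm_group.axioms(2)[OF D_grp] W.group_axioms h2 by blast
    show "\<psi>1 x = \<psi>2 x"
      using x
    proof (rule ds_induct)
      show "\<psi>1 \<one>\<^bsub>direct_sum I V\<^esub> = \<psi>2 \<one>\<^bsub>direct_sum I V\<^esub>" by simp
      fix i v y assume i: "i \<in> I" and v: "v \<in> carrier (V i)" and y: "y \<in> carrier (direct_sum I V)" and e: "\<psi>1 y = \<psi>2 y"
      show "\<psi>1 (ds_inj I V i v \<otimes>\<^bsub>direct_sum I V\<^esub> y) = \<psi>2 (ds_inj I V i v \<otimes>\<^bsub>direct_sum I V\<^esub> y)"
        using H i v e by (simp add: inj_carrier y)
    qed
  qed
qed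

end

theorem mainTheorem3:
  fixes F :: "'f monoid" and z n :: 'f
    and I :: "'i set" and V :: "'i \<Rightarrow> ('f, 'v) fspace"
  assumes "scalar_group F z n"
    and "\<forall>i\<in>I. near_vector_space F z n (V i)"
  shows "near_vector_space F z n (direct_sum I V)
       \<and> (\<forall>i\<in>I. linear_map F (V i) (direct_sum I V) (ds_inj I V i))
       \<and> (\<forall>(W :: ('f, 'w) fspace) (f :: 'i \<Rightarrow> 'v \<Rightarrow> 'w).
            near_vector_space F z n W \<and> (\<forall>i\<in>I. linear_map F (V i) W (f i)) \<longrightarrow>
            (\<exists>\<psi>. linear_map F (direct_sum I V) W \<psi> \<and>
                 (\<forall>i\<in>I. \<forall>v\<in>carrier (V i). \<psi> (ds_inj I V i v) = f i v)) \<and>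
            (\<forall>\<psi>1 \<psi>2. linear_map F (direct_sum I V) W \<psi>1 \<and>
                 (\<forall>i\<in>I. \<forall>v\<in>carrier (V i). \<psi>1 (ds_inj I V i v) = f i v) \<and>
                 linear_map F (direct_sum I V) W \<psi>2 \<and>
                 (\<forall>i\<in>I. \<forall>v\<in>carrier (V i). \<psi>2 (ds_inj I V i v) = f i v) \<longrightarrow>
                 (\<forall>x\<in>carrier (direct_sum I V). \<psi>1 x = \<psi>2 x)))"
  proof -
  have fs: "\<forall>i\<in>I. is_fspace F z n (V i)" using assms(2) by (simp add: near_vector_space_def)
  have free: "\<forall>i\<in>I. \<forall>u\<in>carrier (V i). u \<noteq> \<one>\<^bsub>V i\<^esub> \<longrightarrow>
        (\<forall>a\<in>carrier F. \<forall>b\<in>carrier F. fspace.smult (V i) a u = fspace.smult (V i) b u \<longrightarrow> a = b)"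
    using assms(2) by (simp add: near_vector_space_def)
  have gen: "\<forall>i\<in>I. generate (V i) (quasi_kernel F (V i)) = carrier (V i)"
    using assms(2) by (simp add: near_vector_space_def)
  have "near_vector_space F z n (direct_sum I V)"
    unfolding near_vector_space_def
  proof (intro conjI ballI impI allI)
    show "is_fspace F z n (direct_sum I V)" by (rule D_fspace[OF fs])
    show "generate (direct_sum I V) (quasi_kernel F (direct_sum I V)) = carrier (direct_sum I V)"
      by (rule D_gen[OF fs gen])
    fix u a b assume "u \<in> carrier (direct_sum I V)" "u \<noteq> \<one>\<^bsub>direct_sum I V\<^esub>" "a \<in> carrier F" "b \<in> carrier F"
      "fspace.smult (direct_sum I V) a u = fspace.smult (direct_sum I V) b u"
    then show "a = b" using D_free[OF fs _ _ free] by blast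
  qed
  moreover have "\<forall>i\<in>I. linear_map F (V i) (direct_sum I V) (ds_inj I V i)"
    using inj_linear[OF fs] by blast
  moreover have "\<forall>(W :: ('f, 'w) fspace) (f :: 'i \<Rightarrow> 'v \<Rightarrow> 'w).
            near_vector_space F z n W \<and> (\<forall>i\<in>I. linear_map F (V i) W (f i)) \<longrightarrow>
            (\<exists>\<psi>. linear_map F (direct_sum I V) W \<psi> \<and>
                 (\<forall>i\<in>I. \<forall>v\<in>carrier (V i). \<psi> (ds_inj I V i v) = f i v)) \<and>
            (\<forall>\<psi>1 \<psi>2. linear_map F (direct_sum I V) W \<psi>1 \<and>
                 (\<forall>i\<in>I. \<forall>v\<in>carrier (V i). \<psi>1 (ds_inj I V i v) = f i v) \<and>
                 linear_map F (direct_sum I V) W \<psi>2 \<and>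
                 (\<forall>i\<in>I. \<forall>v\<in>carrier (V i). \<psi>2 (ds_inj I V i v) = f i v) \<longrightarrow>
                 (\<forall>x\<in>carrier (direct_sum I V). \<psi>1 x = \<psi>2 x))"
  proof (intro allI impI)
    fix W :: "('f, 'w) fspace" and f :: "'i \<Rightarrow> 'v \<Rightarrow> 'w"
    assume H: "near_vector_space F z n W \<and> (\<forall>i\<in>I. linear_map F (V i) W (f i))"
    then have W: "is_fspace F z n W" by (simp add: near_vector_space_def)
    show "(\<exists>\<psi>. linear_map F (direct_sum I V) W \<psi> \<and>
                 (\<forall>i\<in>I. \<forall>v\<in>carrier (V i). \<psi> (ds_inj I V i v) = f i v)) \<and>
            (\<forall>\<psi>1 \<psi>2. linear_map F (direct_sum I V) W \<psi>1 \<and>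
                 (\<forall>i\<in>I. \<forall>v\<in>carrier (V i). \<psi>1 (ds_inj I V i v) = f i v) \<and>
                 linear_map F (direct_sum I V) W \<psi>2 \<and>
                 (\<forall>i\<in>I. \<forall>v\<in>carrier (V i). \<psi>2 (ds_inj I V i v) = f i v) \<longrightarrow>
                 (\<forall>x\<in>carrier (direct_sum I V). \<psi>1 x = \<psi>2 x))"
      by (rule universal[OF fs W]) (use H in blast)
  qed
  ultimately show ?thesis by blast
qed

end
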